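(* Let $\mathcal{C}$ be a category. Let $\rho$ be a PBPO$^{+}$ rewrite rule consisting of morphisms $l : K \to L$, $r : K \to R$, monomorphisms $t_L : L \rightarrowtail L'$ and $t_K : K \rightarrowtail K'$, and $l' : K' \to L'$, such that $L \xleftarrow{l} K \xrightarrow{t_K} K'$ is a pullback of $L \xrightarrow{t_L} L' \xleftarrow{l'} K'$. Let $G_L$ be an object, $\alpha : G_L \to L'$ and $m : L \to G_L$ morphisms such that $L \xleftarrow{1_L} L \xrightarrow{m} G_L$ is a pullback of $L \xrightarrow{t_L} L' \xleftarrow{\alpha} G_L$, and let $G_L \xleftarrow{g_L} G_K \xrightarrow{u'} K'$ be a pullback of $G_L \xrightarrow{\alpha} L' \xleftarrow{l'} K'$. Then there exists a morphism $u : K \to G_K$ such that $L \xleftarrow{l} K \xrightarrow{u} G_K$ is a pullback of $L \xrightarrow{m} G_L \xleftarrow{g_L} G_K$, $t_K = u' \circ u$, and $u$ is a monomorphism.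
   Context: A PBPO$^{+}$ rewrite rule in a category is a diagram $L \xleftarrow{l} K \xrightarrow{r} R$ together with monomorphisms $t_L : L \rightarrowtail L'$, $t_K : K \rightarrowtail K'$ and a morphism $l' : K' \to L'$ such that the square $t_L \circ l = l' \circ t_K$ is a pullback square. The pair $(m,\alpha)$ with $L \xleftarrow{1_L} L \xrightarrow{m} G_L$ a pullback of $t_L$ and $\alpha$ is called a strong match. *)

theory Defs
  imports Main
begin

text \<open>Composition is written in diagrammatic-application
  order: Cmp C g f denotes g after f (defined when Cod f = Dom g).\<close>

record ('o, 'a) category =
  Obj :: "'o set"
  Arr :: "'a set"
  Dom :: "'a \<Rightarrow> 'o"
  Cod :: "'a \<Rightarrow> 'o"
  Idt :: "'o \<Rightarrow> 'a"
  Cmp :: "'a \<Rightarrow> 'a \<Rightarrow> 'a"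

definition hom :: "('o, 'a) category \<Rightarrow> 'o \<Rightarrow> 'o \<Rightarrow> 'a set" where
  "hom C X Y = {f \<in> Arr C. Dom C f = X \<and> Cod C f = Y}"

definition is_category :: "('o, 'a) category \<Rightarrow> bool" where
  "is_category C \<longleftrightarrow>
     (\<forall>f \<in> Arr C. Dom C f \<in> Obj C \<and> Cod C f \<in> Obj C) \<and>
     (\<forall>X \<in> Obj C. Idt C X \<in> hom C X X) \<and>
     (\<forall>f \<in> Arr C. \<forall>g \<in> Arr C. Cod C f = Dom C g \<longrightarrow>
        Cmp C g f \<in> hom C (Dom C f) (Cod C g)) \<and>
     (\<forall>f \<in> Arr C. Cmp C f (Idt C (Dom C f)) = f \<and> Cmp C (Idt C (Cod C f)) f = f) \<and>
     (\<forall>f \<in> Arr C. \<forall>g \<in> Arr C. \<forall>h \<in> Arr C.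
        Cod C f = Dom C g \<longrightarrow> Cod C g = Dom C h \<longrightarrow>
        Cmp C h (Cmp C g f) = Cmp C (Cmp C h g) f)"

definition is_mono :: "('o, 'a) category \<Rightarrow> 'a \<Rightarrow> bool" where
  "is_mono C m \<longleftrightarrow> m \<in> Arr C \<and>
     (\<forall>g \<in> Arr C. \<forall>h \<in> Arr C. Dom C g = Dom C h \<longrightarrow> Cod C g = Dom C m \<longrightarrow>
        Cod C h = Dom C m \<longrightarrow> Cmp C m g = Cmp C m h \<longrightarrow> g = h)"

text \<open>is_pullback C f g p q: for a cospan A -f-> X <-g- B, the span A <-p- P -q-> B
  is a pullback of it.\<close>
definition is_pullback :: "('o, 'a) category \<Rightarrow> 'a \<Rightarrow> 'a \<Rightarrow> 'a \<Rightarrow> 'a \<Rightarrow> bool" where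
  "is_pullback C f g p q \<longleftrightarrow>
     f \<in> Arr C \<and> g \<in> Arr C \<and> p \<in> Arr C \<and> q \<in> Arr C \<and>
     Cod C f = Cod C g \<and> Cod C p = Dom C f \<and> Cod C q = Dom C g \<and> Dom C p = Dom C q \<and>
     Cmp C f p = Cmp C g q \<and>
     (\<forall>h \<in> Arr C. \<forall>k \<in> Arr C.
        Cod C h = Dom C f \<longrightarrow> Cod C k = Dom C g \<longrightarrow> Dom C h = Dom C k \<longrightarrow>
        Cmp C f h = Cmp C g k \<longrightarrow>
        (\<exists>!u. u \<in> hom C (Dom C h) (Dom C p) \<and> Cmp C p u = h \<and> Cmp C q u = k))"

end

theory Submission
  imports Defs
begin

lemma cmp_hom:
  assumes "is_category C" "f \<in> Arr C" "g \<in> Arr C" "Cod C f = Dom C g"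
  shows "Cmp C g f \<in> Arr C" "Dom C (Cmp C g f) = Dom C f" "Cod C (Cmp C g f) = Cod C g"
  using assms unfolding is_category_def hom_def by auto

lemma cmp_assoc:
  assumes "is_category C" "f \<in> Arr C" "g \<in> Arr C" "h \<in> Arr C"
    "Cod C f = Dom C g" "Cod C g = Dom C h"
  shows "Cmp C h (Cmp C g f) = Cmp C (Cmp C h g) f"
  using assms unfolding is_category_def by blast

lemma pb_univ:
  assumes "is_pullback C f g p q" "h \<in> Arr C" "k \<in> Arr C" "Cod C h = Dom C f"
    "Cod C k = Dom C g" "Dom C h = Dom C k" "Cmp C f h = Cmp C g k"
  shows "\<exists>!u. u \<in> hom C (Dom C h) (Dom C p) \<and> Cmp C p u = h \<and> Cmp C q u = k"
  using assms unfolding is_pullback_def by blast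

lemma cmp_id:
  assumes "is_category C" "f \<in> Arr C"
  shows "Cmp C f (Idt C (Dom C f)) = f"
  using assms unfolding is_category_def by blast

theorem lemma1:
  fixes C :: "('o, 'a) category"
    and L K R L' K' G_L G_K :: 'o
    and l r t_L t_K l' \<alpha> m g_L u' :: 'a
  assumes cat: "is_category C"
    and objs: "L \<in> Obj C" "K \<in> Obj C" "R \<in> Obj C" "L' \<in> Obj C" "K' \<in> Obj C"
              "G_L \<in> Obj C" "G_K \<in> Obj C"
    and l: "l \<in> hom C K L" and r: "r \<in> hom C K R"
    and tL: "t_L \<in> hom C L L'" "is_mono C t_L"
    and tK: "t_K \<in> hom C K K'" "is_mono C t_K"
    and l': "l' \<in> hom C K' L'"
    and rule_pb: "is_pullback C t_L l' l t_K"
    and \<alpha>: "\<alpha> \<in> hom C G_L L'"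
    and m: "m \<in> hom C L G_L"
    and match_pb: "is_pullback C t_L \<alpha> (Idt C L) m"
    and gL: "g_L \<in> hom C G_K G_L"
    and u': "u' \<in> hom C G_K K'"
    and GK_pb: "is_pullback C \<alpha> l' g_L u'"
  shows "\<exists>u. u \<in> hom C K G_K \<and> is_pullback C m g_L l u \<and>
             t_K = Cmp C u' u \<and> is_mono C u"
proof -
  note H = l tL(1) tK(1) l' \<alpha> m gL u'
  note H' = H[unfolded hom_def, simplified]
  note cm = cmp_hom[OF cat] and as = cmp_assoc[OF cat]
  have tLam: "t_L = Cmp C \<alpha> m"
  proof -
    have "Cmp C t_L (Idt C L) = Cmp C \<alpha> m" using match_pb unfolding is_pullback_def by blast
    moreover have "Cmp C t_L (Idt C L) = t_L" using cmp_id[OF cat, of t_L] H' by simp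
    ultimately show ?thesis by simp
  qed
  have rc: "Cmp C t_L l = Cmp C l' t_K" using rule_pb unfolding is_pullback_def by blast
  have gc: "Cmp C \<alpha> g_L = Cmp C l' u'" using GK_pb unfolding is_pullback_def by blast
  have ml: "Cmp C m l \<in> Arr C" "Dom C (Cmp C m l) = K" "Cod C (Cmp C m l) = G_L"
    using cm[of l m] H' by auto
  have "Cmp C \<alpha> (Cmp C m l) = Cmp C l' t_K"
    using as[of l m \<alpha>] H' tLam rc by simp
  then obtain u where u: "u \<in> hom C K G_K" "Cmp C g_L u = Cmp C m l" "Cmp C u' u = t_K"
    using pb_univ[OF GK_pb ml(1), of t_K] ml H' GK_pb unfolding is_pullback_def by auto
  note uu = u(1)[unfolded hom_def, simplified]
  have mono: "is_mono C u"
    unfolding is_mono_def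
  proof (intro conjI ballI impI)
    show "u \<in> Arr C" using uu by simp
    fix g h assume gh: "g \<in> Arr C" "h \<in> Arr C" "Dom C g = Dom C h" "Cod C g = Dom C u"
      "Cod C h = Dom C u" "Cmp C u g = Cmp C u h"
    have "Cmp C t_K g = Cmp C t_K h"
      using as[of g u u'] as[of h u u'] gh uu H' u(3) by metis
    then show "g = h" using tK(2) gh uu H' unfolding is_mono_def by metis
  qed
  have pb: "is_pullback C m g_L l u"
    unfolding is_pullback_def
  proof (intro conjI ballI impI)
    show "m \<in> Arr C" "g_L \<in> Arr C" "l \<in> Arr C" "u \<in> Arr C" using H' uu by auto
    show "Cod C m = Cod C g_L" "Cod C l = Dom C m" "Cod C u = Dom C g_L" "Dom C l = Dom C u"
      using H' uu by auto
    show "Cmp C m l = Cmp C g_L u" using u by simp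
    fix h k assume hk: "h \<in> Arr C" "k \<in> Arr C" "Cod C h = Dom C m" "Cod C k = Dom C g_L"
      "Dom C h = Dom C k" "Cmp C m h = Cmp C g_L k"
    have uk: "Cmp C u' k \<in> Arr C" "Dom C (Cmp C u' k) = Dom C k" "Cod C (Cmp C u' k) = K'"
      using cm[of k u'] hk H' by auto
    have "Cmp C t_L h = Cmp C l' (Cmp C u' k)"
    proof -
      have "Cmp C t_L h = Cmp C \<alpha> (Cmp C m h)" using tLam as[of h m \<alpha>] hk H' by simp
      also have "\<dots> = Cmp C \<alpha> (Cmp C g_L k)" using hk by simp
      also have "\<dots> = Cmp C (Cmp C \<alpha> g_L) k" using as[of k g_L \<alpha>] hk H' by simp
      also have "\<dots> = Cmp C (Cmp C l' u') k" using gc by simp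
      also have "\<dots> = Cmp C l' (Cmp C u' k)" using as[of k u' l'] hk H' by simp
      finally show ?thesis .
    qed
    then have ex: "\<exists>!v. v \<in> hom C (Dom C h) (Dom C l) \<and> Cmp C l v = h \<and> Cmp C t_K v = Cmp C u' k"
      using pb_univ[OF rule_pb hk(1) uk(1)] hk H' uk by simp
    have DL: "Dom C l = K" using H' by simp
    obtain v where v: "v \<in> hom C (Dom C h) K" "Cmp C l v = h" "Cmp C t_K v = Cmp C u' k"
      and vuniq: "\<And>w. w \<in> hom C (Dom C h) K \<Longrightarrow> Cmp C l w = h \<Longrightarrow> Cmp C t_K w = Cmp C u' k \<Longrightarrow> w = v"
      using ex[unfolded DL] by blast
    note vv = v(1)[unfolded hom_def, simplified]
    have uv: "Cmp C u v \<in> Arr C" "Dom C (Cmp C u v) = Dom C h" "Cod C (Cmp C u v) = G_K"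
      using cm[of v u] vv uu by auto
    have gk: "Cmp C g_L k \<in> Arr C" "Dom C (Cmp C g_L k) = Dom C k" "Cod C (Cmp C g_L k) = G_L"
      using cm[of k g_L] hk H' by auto
    have e1: "Cmp C g_L (Cmp C u v) = Cmp C g_L k"
      using as[of v u g_L] as[of v l m] vv uu H' u(2) v(2) hk(6) by metis
    have e2: "Cmp C u' (Cmp C u v) = Cmp C u' k"
      using as[of v u u'] vv uu H' u(3) v(3) by metis
    have "Cmp C u v = k"
    proof -
      have "\<exists>!w. w \<in> hom C (Dom C (Cmp C g_L k)) (Dom C g_L) \<and> Cmp C g_L w = Cmp C g_L k \<and> Cmp C u' w = Cmp C u' k"
      proof -
        have "Cmp C \<alpha> (Cmp C g_L k) = Cmp C l' (Cmp C u' k)"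
          using as[of k g_L \<alpha>] as[of k u' l'] hk H' gc by simp
        then show ?thesis using pb_univ[OF GK_pb gk(1) uk(1)] gk uk H' by simp
      qed
      moreover have "Cmp C u v \<in> hom C (Dom C (Cmp C g_L k)) (Dom C g_L)"
        using uv gk hk H' unfolding hom_def by auto
      moreover have "k \<in> hom C (Dom C (Cmp C g_L k)) (Dom C g_L)"
        using gk hk H' unfolding hom_def by auto
      ultimately show ?thesis using e1 e2 by blast
    qed
    show "\<exists>!w. w \<in> hom C (Dom C h) (Dom C l) \<and> Cmp C l w = h \<and> Cmp C u w = k"
    proof (rule ex1I[of _ v])
      show "v \<in> hom C (Dom C h) (Dom C l) \<and> Cmp C l v = h \<and> Cmp C u v = k"
        using v H' \<open>Cmp C u v = k\<close> by simp
      fix w assume w: "w \<in> hom C (Dom C h) (Dom C l) \<and> Cmp C l w = h \<and> Cmp C u w = k"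
      have "Cmp C t_K w = Cmp C u' k"
        using as[of w u u'] w uu H' u(3) unfolding hom_def by auto
      then show "w = v" using vuniq w H' by simp
    qed
  qed
  show ?thesis using u pb mono by auto
qed

end
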